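(* Let $D\ge1$, let $Q_D$ be the $D$-dimensional hypercube on $X=\{0,1\}^D$ with adjacency matrix $A$. For $1\le i<j\le D$ the matrix $B_{ij}=\alpha^*_iA\alpha^*_j-\alpha^*_jA\alpha^*_i$ is antisymmetric and $A$-like.
   Context: $Q_D$ is the graph with vertex set $X=\{0,1\}^D$, two vertices adjacent iff they differ in exactly one coordinate. Matrices are real with rows and columns indexed by $X$. A matrix $B$ is $A$-like if $BA=AB$ and $B_{xy}=0$ for all $x,y\in X$ that are neither equal nor adjacent; it is antisymmetric if $B^t=-B$. For $1\le i\le D$, $\alpha^*_i$ is the diagonal matrix with $(x,x)$-entry $1$ if $x_i=0$ and $-1$ if $x_i=1$. *)

theory Defs
  imports Complex_Main
begin

text \<open>Vertices of Q_D: 0/1 vectors with coordinates 1..D, encoded as functions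
  nat \<Rightarrow> bool that are False outside {1..D} (True = 1).
  Real matrices indexed by X are functions X \<Rightarrow> X \<Rightarrow> real; only entries on X matter.\<close>

type_synonym vtx = "nat \<Rightarrow> bool"
type_synonym xmat = "vtx \<Rightarrow> vtx \<Rightarrow> real"

definition cube :: "nat \<Rightarrow> vtx set" where
  "cube D = {x. \<forall>i. x i \<longrightarrow> i \<in> {1..D}}"

definition adjacent :: "nat \<Rightarrow> vtx \<Rightarrow> vtx \<Rightarrow> bool" where
  "adjacent D x y \<longleftrightarrow> x \<in> cube D \<and> y \<in> cube D \<and> card {i \<in> {1..D}. x i \<noteq> y i} = 1"

definition adj_mat :: "nat \<Rightarrow> xmat" where
  "adj_mat D x y = (if adjacent D x y then 1 else 0)"

definition mmult :: "nat \<Rightarrow> xmat \<Rightarrow> xmat \<Rightarrow> xmat" where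
  "mmult D M N x y = (\<Sum>z\<in>cube D. M x z * N z y)"

definition mdiff :: "xmat \<Rightarrow> xmat \<Rightarrow> xmat" where
  "mdiff M N x y = M x y - N x y"

definition alpha_star :: "nat \<Rightarrow> xmat" where
  "alpha_star i x y = (if x = y then (if x i then -1 else 1) else 0)"

definition A_like :: "nat \<Rightarrow> xmat \<Rightarrow> bool" where
  "A_like D B \<longleftrightarrow>
     (\<forall>x\<in>cube D. \<forall>y\<in>cube D. mmult D B (adj_mat D) x y = mmult D (adj_mat D) B x y) \<and>
     (\<forall>x\<in>cube D. \<forall>y\<in>cube D. x \<noteq> y \<and> \<not> adjacent D x y \<longrightarrow> B x y = 0)"

definition antisymmetric_mat :: "nat \<Rightarrow> xmat \<Rightarrow> bool" where
  "antisymmetric_mat D B \<longleftrightarrow> (\<forall>x\<in>cube D. \<forall>y\<in>cube D. B y x = - B x y)"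

definition B_mat :: "nat \<Rightarrow> nat \<Rightarrow> nat \<Rightarrow> xmat" where
  "B_mat D i j = mdiff (mmult D (mmult D (alpha_star i) (adj_mat D)) (alpha_star j))
                       (mmult D (mmult D (alpha_star j) (adj_mat D)) (alpha_star i))"

end

theory Submission
  imports Defs
begin

definition flip :: "nat \<Rightarrow> vtx \<Rightarrow> vtx" where
  "flip k x = x(k := \<not> x k)"

definition sg :: "nat \<Rightarrow> vtx \<Rightarrow> real" where
  "sg i x = (if x i then -1 else 1)"

lemma flip_flip[simp]: "flip k (flip k x) = x"
  by (auto simp: flip_def)

lemma flip_comm: "flip k (flip l x) = flip l (flip k x)"
  by (auto simp: flip_def fun_eq_iff)

lemma flip_neq: "flip k x \<noteq> x"
  by (auto simp: flip_def fun_eq_iff)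

lemma flip_cube: "x \<in> cube D \<Longrightarrow> k \<in> {1..D} \<Longrightarrow> flip k x \<in> cube D"
  by (auto simp: flip_def cube_def)

lemma sg_flip: "sg i (flip k x) = (if k = i then - sg i x else sg i x)"
  by (auto simp: sg_def flip_def)

lemma flip_eq_iff: "(y = flip k x) = (x = flip k y)"
  by auto

lemma adjacent_iff:
  "adjacent D x y \<longleftrightarrow> x \<in> cube D \<and> y \<in> cube D \<and> (\<exists>k\<in>{1..D}. y = flip k x)"
proof
  assume a: "adjacent D x y"
  then have c: "x \<in> cube D" "y \<in> cube D" and cd: "card {i \<in> {1..D}. x i \<noteq> y i} = 1"
    by (auto simp: adjacent_def)
  from cd obtain k where k: "{i \<in> {1..D}. x i \<noteq> y i} = {k}" using card_1_singletonE by blast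
  then have kD: "k \<in> {1..D}" and kx: "x k \<noteq> y k" by auto
  have "y = flip k x"
  proof
    fix i
    show "y i = flip k x i"
    proof (cases "i = k")
      case True then show ?thesis using kx by (auto simp: flip_def)
    next
      case False
      show ?thesis
      proof (cases "i \<in> {1..D}")
        case True
        then have "x i = y i" using k False by blast
        then show ?thesis using False by (simp add: flip_def)
      next
        case F2: False
        then have "\<not> x i" "\<not> y i" using c by (auto simp: cube_def)
        then show ?thesis using False by (simp add: flip_def)
      qed
    qed
  qed
  then show "x \<in> cube D \<and> y \<in> cube D \<and> (\<exists>k\<in>{1..D}. y = flip k x)" using c kD by blast
next
  assume "x \<in> cube D \<and> y \<in> cube D \<and> (\<exists>k\<in>{1..D}. y = flip k x)"
  then obtain k where c: "x \<in> cube D" "y \<in> cube D" and kD: "k \<in> {1..D}" and y: "y = flip k x"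
    by blast
  have "{i \<in> {1..D}. x i \<noteq> y i} = {k}" using kD by (auto simp: y flip_def)
  then show "adjacent D x y" using c by (simp add: adjacent_def)
qed

lemma adjacent_sym: "adjacent D x y = adjacent D y x"
proof -
  have "(\<exists>k\<in>{1..D}. y = flip k x) = (\<exists>k\<in>{1..D}. x = flip k y)"
    using flip_eq_iff by blast
  then show ?thesis unfolding adjacent_iff by blast
qed

lemma adj_sym: "adj_mat D x y = adj_mat D y x"
  by (simp add: adj_mat_def adjacent_sym)

lemma adj_flip_swap: "adj_mat D (flip k x) y = adj_mat D x (flip k y)"
  if "k \<in> {1..D}" "x \<in> cube D" "y \<in> cube D"
proof -
  have "adjacent D (flip k x) y = adjacent D x (flip k y)"
  proof -
    have e: "(y = flip l (flip k x)) = (flip k y = flip l x)" for l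
      by (metis flip_comm flip_flip)
    show ?thesis using that unfolding adjacent_iff e by (simp add: flip_cube)
  qed
  then show ?thesis by (simp add: adj_mat_def)
qed

lemma sum_pick: "a \<in> S \<Longrightarrow> finite S \<Longrightarrow> (\<Sum>z\<in>S. (if z = a then f z else 0)) = f a"
  by (simp add: sum.delta')

lemma left_diag: "x \<in> cube D \<Longrightarrow> finite (cube D) \<Longrightarrow>
  mmult D (alpha_star i) M x y = sg i x * M x y"
proof -
  assume a: "x \<in> cube D" "finite (cube D)"
  have "mmult D (alpha_star i) M x y = (\<Sum>z\<in>cube D. if z = x then sg i x * M z y else 0)"
    unfolding mmult_def alpha_star_def sg_def by (rule sum.cong) auto
  also have "\<dots> = sg i x * M x y" using a by (simp add: sum_pick)
  finally show ?thesis .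
qed

lemma right_diag: "y \<in> cube D \<Longrightarrow> finite (cube D) \<Longrightarrow>
  mmult D M (alpha_star i) x y = M x y * sg i y"
proof -
  assume a: "y \<in> cube D" "finite (cube D)"
  have "mmult D M (alpha_star i) x y = (\<Sum>z\<in>cube D. if z = y then M x z * sg i y else 0)"
    unfolding mmult_def alpha_star_def sg_def by (rule sum.cong) auto
  also have "\<dots> = M x y * sg i y" using a by (simp add: sum_pick)
  finally show ?thesis .
qed

lemma finite_cube: "finite (cube D)"
proof -
  have "cube D \<subseteq> {x. \<forall>i. i \<notin> {1..D} \<longrightarrow> x i = False}" by (auto simp: cube_def)
  moreover have "finite {x::nat\<Rightarrow>bool. \<forall>i. i \<notin> {1..D} \<longrightarrow> x i = False}"
    using finite_set_of_finite_funs[of "{1..D}" "UNIV::bool set" False] by simp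
  ultimately show ?thesis by (rule finite_subset)
qed



lemma flip_inj: "flip k x = flip l x \<Longrightarrow> k = l"
  by (auto simp: flip_def fun_eq_iff split: if_splits)

lemma B_formula:
  assumes "x \<in> cube D" "y \<in> cube D"
  shows "B_mat D i j x y = sg i x * adj_mat D x y * sg j y - sg j x * adj_mat D x y * sg i y"
  using assms by (simp add: B_mat_def mdiff_def right_diag left_diag finite_cube)

context
  fixes D i j :: nat
  assumes ij: "i \<noteq> j" "i \<in> {1..D}" "j \<in> {1..D}"
begin

definition ee :: "vtx \<Rightarrow> real" where "ee x = sg i x * sg j x"

lemma ee_flip: "ee (flip k x) = (if k = i \<or> k = j then - ee x else ee x)"
  using ij by (auto simp: ee_def sg_flip)

lemma B_closed:
  assumes x: "x \<in> cube D" and y: "y \<in> cube D"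
  shows "B_mat D i j x y = 2 * ee x * ((if y = flip i x then 1 else 0) - (if y = flip j x then 1 else 0))"
proof (cases "adjacent D x y")
  case False
  then have "y \<noteq> flip i x" "y \<noteq> flip j x" using ij x y adjacent_iff by blast+
  then show ?thesis using False x y by (simp add: B_formula adj_mat_def)
next
  case True
  then obtain k where k: "k \<in> {1..D}" "y = flip k x" using adjacent_iff by blast
  have ne: "flip i x \<noteq> flip j x" using ij flip_inj by blast
  show ?thesis
    using True x y k ij ne flip_inj[of k x i] flip_inj[of k x j]
    by (auto simp: B_formula adj_mat_def sg_flip ee_def)
qed

lemma BA:
  assumes x: "x \<in> cube D" and y: "y \<in> cube D"
  shows "mmult D (B_mat D i j) (adj_mat D) x y
       = 2 * ee x * (adj_mat D (flip i x) y - adj_mat D (flip j x) y)"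
proof -
  have "mmult D (B_mat D i j) (adj_mat D) x y
     = (\<Sum>z\<in>cube D. (if z = flip i x then 2 * ee x * adj_mat D z y else 0)
                    - (if z = flip j x then 2 * ee x * adj_mat D z y else 0))"
    unfolding mmult_def by (rule sum.cong) (auto simp: B_closed x)
  also have "\<dots> = 2 * ee x * adj_mat D (flip i x) y - 2 * ee x * adj_mat D (flip j x) y"
  proof -
    have "flip i x \<in> cube D" "flip j x \<in> cube D" using x ij by (auto intro: flip_cube)
    then show ?thesis by (simp add: sum_subtractf sum_pick finite_cube)
  qed
  finally show ?thesis by (simp add: algebra_simps)
qed

lemma AB:
  assumes x: "x \<in> cube D" and y: "y \<in> cube D"
  shows "mmult D (adj_mat D) (B_mat D i j) x y
       = - 2 * ee y * (adj_mat D x (flip i y) - adj_mat D x (flip j y))"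
proof -
  have "mmult D (adj_mat D) (B_mat D i j) x y
     = (\<Sum>z\<in>cube D. (if z = flip i y then 2 * ee z * adj_mat D x z else 0)
                    - (if z = flip j y then 2 * ee z * adj_mat D x z else 0))"
    unfolding mmult_def
  proof (rule sum.cong)
    fix z assume z: "z \<in> cube D"
    have e1: "(y = flip i z) = (z = flip i y)" "(y = flip j z) = (z = flip j y)" by auto
    show "adj_mat D x z * B_mat D i j z y =
      (if z = flip i y then 2 * ee z * adj_mat D x z else 0) -
      (if z = flip j y then 2 * ee z * adj_mat D x z else 0)"
      unfolding B_closed[OF z y] e1 by (simp add: algebra_simps)
  qed simp
  also have "\<dots> = 2 * ee (flip i y) * adj_mat D x (flip i y) - 2 * ee (flip j y) * adj_mat D x (flip j y)"
  proof -
    have "flip i y \<in> cube D" "flip j y \<in> cube D" using y ij by (auto intro: flip_cube)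
    then show ?thesis by (simp add: sum_subtractf sum_pick finite_cube)
  qed
  finally show ?thesis by (simp add: algebra_simps ee_flip)
qed

lemma comm:
  assumes x: "x \<in> cube D" and y: "y \<in> cube D"
  shows "mmult D (B_mat D i j) (adj_mat D) x y = mmult D (adj_mat D) (B_mat D i j) x y"
proof -
  define a where "a = adjacent D (flip i x) y"
  define b where "b = adjacent D (flip j x) y"
  have "ee x * ((if a then 1 else 0) - (if b then 1 else 0))
      = - ee y * ((if a then 1 else 0) - (if b then 1 else 0))"
  proof (cases "a = b")
    case True then show ?thesis by simp
  next
    case False
    have key: "ee y = - ee x" if a: "adjacent D (flip p x) y" and nb: "\<not> adjacent D (flip q x) y"
      and ij': "p \<in> {i, j}" "q \<in> {i,j}" "p \<noteq> q"
      for p q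
    proof -
      obtain k where k: "k \<in> {1..D}" "y = flip k (flip p x)" using a adjacent_iff by blast
      have fx: "flip p x \<in> cube D" "flip q x \<in> cube D" using x ij ij' by (auto intro: flip_cube)
      have "k \<noteq> q"
      proof
        assume "k = q"
        then have "y = flip p (flip q x)" using k flip_comm by metis
        then show False using nb adjacent_iff fx y ij ij' by blast
      qed
      moreover have "k \<noteq> p"
      proof
        assume "k = p"
        then have "y = flip q (flip q x)" using k by (metis flip_flip)
        then show False using nb adjacent_iff fx y ij ij' by blast
      qed
      ultimately show ?thesis using ij' ee_flip k(2) by (auto simp: ee_flip)
    qed
    show ?thesis
    proof (cases a)
      case True
      then have "\<not> b" using False by simp
      then have "ee y = - ee x" using key[of i j] True ij a_def b_def by auto
      then show ?thesis by simp
    next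
      case F: False
      then have "b" using False by simp
      then have "ee y = - ee x" using key[of j i] F ij a_def b_def by auto
      then show ?thesis by simp
    qed
  qed
  then show ?thesis
    using BA[OF x y] AB[OF x y] adj_flip_swap[OF ij(2) x y] adj_flip_swap[OF ij(3) x y]
    by (simp add: adj_mat_def a_def b_def)
qed

end

theorem lemma9p5:
  fixes D i j :: nat
  assumes "D \<ge> 1" and "1 \<le> i" and "i < j" and "j \<le> D"
  shows "antisymmetric_mat D (B_mat D i j) \<and> A_like D (B_mat D i j)"
proof -
  have ij: "i \<noteq> j" "i \<in> {1..D}" "j \<in> {1..D}" using assms by auto
  have anti: "antisymmetric_mat D (B_mat D i j)"
    unfolding antisymmetric_mat_def by (auto simp: B_formula adj_sym[of D _] algebra_simps)
  have z: "B_mat D i j x y = 0" if "x \<in> cube D" "y \<in> cube D" "\<not> adjacent D x y" for x y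
    using that by (simp add: B_formula adj_mat_def)
  show ?thesis using anti z comm[OF ij] unfolding A_like_def by blast
qed

end
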